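(* Let $q$ be a prime power and $b,k,t$ positive integers. For the $b$-symbol weight function $wt_b$ on $\mathbb{F}_q^k$, $r_b^{wt_b}(k,t)\ge 2t-b+1$.
   Context: For $\boldsymbol{z}=(z_0,\ldots,z_{n-1}),\boldsymbol{w}\in\mathbb{F}_q^n$, $d_b(\boldsymbol{z},\boldsymbol{w})$ is the number of $i\in\{0,\ldots,n-1\}$ with $(z_i,\ldots,z_{i+b-1})\ne(w_i,\ldots,w_{i+b-1})$ (indices mod $n$), and $wt_b(\boldsymbol{x})=d_b(\boldsymbol{x},\boldsymbol{0})$. A systematic encoding $\mathrm{Enc}(\boldsymbol{x})=(\boldsymbol{x},p(\boldsymbol{x}))\in\mathbb{F}_q^{k+r}$ is a function-correcting $b$-symbol code for $f$ if $d_b(\mathrm{Enc}(\boldsymbol{x}_1),\mathrm{Enc}(\boldsymbol{x}_2))\ge 2t+1$ whenever $f(\boldsymbol{x}_1)\ne f(\boldsymbol{x}_2)$; $r_b^f(k,t)$ is the smallest $r$ for which one exists. The paper's standing assumptions are $2<b<k$ and $t>\lfloor\frac{b-1}{2}\rfloor$. *)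

theory Defs
  imports Main
begin

text \<open>Vectors in F_q^n are lists of length n over a finite field type 'q.
  Indices are taken modulo the length n (cyclic b-symbol read).\<close>

definition bsym_dist :: "nat \<Rightarrow> 'q list \<Rightarrow> 'q list \<Rightarrow> nat" where
  "bsym_dist b z w =
     card {i. i < length z \<and>
              (map (\<lambda>j. z ! ((i + j) mod length z)) [0..<b]
               \<noteq> map (\<lambda>j. w ! ((i + j) mod length z)) [0..<b])}"

definition bsym_wt :: "nat \<Rightarrow> 'q::zero list \<Rightarrow> nat" where
  "bsym_wt b x = bsym_dist b x (replicate (length x) 0)"

definition is_fc_bsym_code ::
  "nat \<Rightarrow> ('q list \<Rightarrow> 'c) \<Rightarrow> nat \<Rightarrow> nat \<Rightarrow> nat \<Rightarrow> ('q list \<Rightarrow> 'q list) \<Rightarrow> bool" where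
  "is_fc_bsym_code b f k r t p \<longleftrightarrow>
     (\<forall>x. length x = k \<longrightarrow> length (p x) = r) \<and>
     (\<forall>x1 x2. length x1 = k \<longrightarrow> length x2 = k \<longrightarrow> f x1 \<noteq> f x2 \<longrightarrow>
        bsym_dist b (x1 @ p x1) (x2 @ p x2) \<ge> 2 * t + 1)"

definition opt_redundancy ::
  "nat \<Rightarrow> ('q list \<Rightarrow> 'c) \<Rightarrow> nat \<Rightarrow> nat \<Rightarrow> nat" where
  "opt_redundancy b f k t = (LEAST r. \<exists>p. is_fc_bsym_code b f k r t p)"

end

theory Submission
  imports Defs
begin

lemma hamming_lb:
  fixes z w :: "'a list"
  assumes b: "0 < b" and A: "A \<subseteq> {i. i < length z \<and> z!i \<noteq> w!i}"
  shows "card A \<le> bsym_dist b z w"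
proof -
  have "A \<subseteq> {i. i < length z \<and>
              (map (\<lambda>j. z ! ((i + j) mod length z)) [0..<b]
               \<noteq> map (\<lambda>j. w ! ((i + j) mod length z)) [0..<b])}"
  proof
    fix i assume "i \<in> A"
    then have i: "i < length z" "z!i \<noteq> w!i" using A by auto
    have "map (\<lambda>j. z ! ((i + j) mod length z)) [0..<b] ! 0 \<noteq> map (\<lambda>j. w ! ((i + j) mod length z)) [0..<b] ! 0"
      using i b by simp
    then have "map (\<lambda>j. z ! ((i + j) mod length z)) [0..<b] \<noteq> map (\<lambda>j. w ! ((i + j) mod length z)) [0..<b]"
      by (rule contrapos_nn) (simp only:)
    then show "i \<in> {i. i < length z \<and>
              (map (\<lambda>j. z ! ((i + j) mod length z)) [0..<b]
               \<noteq> map (\<lambda>j. w ! ((i + j) mod length z)) [0..<b])}" using i by (intro CollectI conjI)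
  qed
  then show ?thesis unfolding bsym_dist_def by (intro card_mono) auto
qed

lemma rep_nth:
  assumes "length x = k" "n < k + 2*t*k"
  shows "(x @ map (\<lambda>j. x ! (j mod k)) [0..<2*t*k]) ! n = x ! (n mod k)"
proof (cases "n < k")
  case True then show ?thesis using assms by (simp add: nth_append)
next
  case False
  have "(n - k) < 2*t*k" using False assms(2) by linarith
  then have "(x @ map (\<lambda>j. x ! (j mod k)) [0..<2*t*k]) ! n = x ! ((n - k) mod k)"
    using assms False by (simp add: nth_append del: upt_Suc)
  also have "(n - k) mod k = n mod k" using le_mod_geq[of k n] False by simp
  finally show ?thesis .
qed

lemma exists_code:
  assumes b: "0 < b"
  shows "\<exists>p. is_fc_bsym_code b f k (2*t*k) t p"
proof -
  define p where "p = (\<lambda>x::'a list. map (\<lambda>j. x ! (j mod k)) [0..<2*t*k])"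
  have "is_fc_bsym_code b f k (2*t*k) t p"
    unfolding is_fc_bsym_code_def
  proof (intro conjI allI impI)
    fix x :: "'a list" assume "length x = k" then show "length (p x) = 2*t*k" by (simp add: p_def)
  next
    fix x1 x2 :: "'a list"
    assume l1: "length x1 = k" and l2: "length x2 = k" and f: "f x1 \<noteq> f x2"
    then have "x1 \<noteq> x2" by auto
    then obtain i where i: "i < k" "x1 ! i \<noteq> x2 ! i" using l1 l2 nth_equalityI by metis
    define A where "A = (\<lambda>c. i + c*k) ` {..<2*t+1}"
    have inj: "inj_on (\<lambda>c. i + c*k) {..<2*t+1}" using i by (intro inj_onI) auto
    have cA: "card A = 2*t+1" unfolding A_def using card_image[OF inj] by simp
    have "A \<subseteq> {n. n < length (x1 @ p x1) \<and> (x1 @ p x1)!n \<noteq> (x2 @ p x2)!n}"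
    proof
      fix n assume "n \<in> A"
      then obtain c where c: "c < 2*t+1" "n = i + c*k" unfolding A_def by auto
      have "c*k \<le> 2*t*k" using c by simp
      then have nlt: "n < k + 2*t*k" using c i by linarith
      have nm: "n mod k = i" using c i by simp
      show "n \<in> {n. n < length (x1 @ p x1) \<and> (x1 @ p x1)!n \<noteq> (x2 @ p x2)!n}"
        using rep_nth[OF l1 nlt] rep_nth[OF l2 nlt] nm nlt i l1 by (simp add: p_def)
    qed
    from hamming_lb[OF b this] cA
    show "bsym_dist b (x1 @ p x1) (x2 @ p x2) \<ge> 2 * t + 1" by simp
  qed
  then show ?thesis by blast
qed

lemma lower:
  fixes p :: "'q::{finite,field} list \<Rightarrow> 'q list"
  assumes b: "0 < b" "b < k" and code: "is_fc_bsym_code b (bsym_wt b :: 'q list \<Rightarrow> nat) k r t p"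
  shows "2*t+1 \<le> r + b"
proof -
  define x1 where "x1 = (replicate k (0::'q))"
  define x2 where "x2 = (replicate (k-1) (0::'q)) @ [1]"
  have l1: "length x1 = k" and l2: "length x2 = k" using b by (auto simp: x1_def x2_def)
  have w1: "bsym_wt b x1 = 0" unfolding bsym_wt_def bsym_dist_def x1_def by simp
  have "k - 1 \<in> {i. i < length x2 \<and>
              (map (\<lambda>j. x2 ! ((i + j) mod length x2)) [0..<b]
               \<noteq> map (\<lambda>j. replicate (length x2) 0 ! ((i + j) mod length x2)) [0..<b])}"
  proof -
    have "map (\<lambda>j. x2 ! ((k - 1 + j) mod length x2)) [0..<b] ! 0 \<noteq>
          map (\<lambda>j. (replicate (length x2) (0::'q)) ! ((k - 1 + j) mod length x2)) [0..<b] ! 0"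
      using b l2 by (simp add: x2_def nth_append)
    then have "map (\<lambda>j. x2 ! ((k - 1 + j) mod length x2)) [0..<b] \<noteq>
          map (\<lambda>j. (replicate (length x2) (0::'q)) ! ((k - 1 + j) mod length x2)) [0..<b]"
      by (rule contrapos_nn) (simp only:)
    moreover have "k - 1 < length x2" using l2 b by simp
    ultimately show ?thesis by (intro CollectI conjI)
  qed
  then have w2: "bsym_wt b x2 \<noteq> 0" unfolding bsym_wt_def bsym_dist_def
    by (subst card_0_eq) auto
  have lp1: "length (p x1) = r" and lp2: "length (p x2) = r" using code l1 l2
    unfolding is_fc_bsym_code_def by auto
  have ge: "bsym_dist b (x1 @ p x1) (x2 @ p x2) \<ge> 2 * t + 1"
    using code l1 l2 w1 w2 unfolding is_fc_bsym_code_def by auto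
  define z where "z = x1 @ p x1"
  define w where "w = x2 @ p x2"
  have lz: "length z = k + r" and lw: "length w = k + r" using l1 l2 lp1 lp2 by (auto simp: z_def w_def)
  have agree: "z ! m = w ! m" if "m < k - 1" for m
    using that l1 l2 by (auto simp: z_def w_def nth_append x1_def x2_def)
  have sub: "{i. i < length z \<and>
              (map (\<lambda>j. z ! ((i + j) mod length z)) [0..<b]
               \<noteq> map (\<lambda>j. w ! ((i + j) mod length z)) [0..<b])} \<subseteq> {k-b..<k+r}"
  proof
    fix i assume "i \<in> {i. i < length z \<and>
              (map (\<lambda>j. z ! ((i + j) mod length z)) [0..<b]
               \<noteq> map (\<lambda>j. w ! ((i + j) mod length z)) [0..<b])}"
    then have i: "i < k + r" and ne: "map (\<lambda>j. z ! ((i + j) mod length z)) [0..<b]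
               \<noteq> map (\<lambda>j. w ! ((i + j) mod length z)) [0..<b]" using lz by auto
    show "i \<in> {k-b..<k+r}"
    proof (rule ccontr)
      assume "i \<notin> {k-b..<k+r}"
      then have ik: "i < k - b" using i by auto
      have "map (\<lambda>j. z ! ((i + j) mod length z)) [0..<b]
               = map (\<lambda>j. w ! ((i + j) mod length z)) [0..<b]"
      proof (rule map_cong[OF refl])
        fix j assume "j \<in> set [0..<b]"
        then have j: "j < b" by simp
        then have "i + j < k - 1" using ik b by linarith
        moreover have "(i + j) mod length z = i + j" using \<open>i + j < k - 1\<close> lz by simp
        ultimately show "z ! ((i + j) mod length z) = w ! ((i + j) mod length z)"
          using agree by simp
      qed
      then show False using ne by simp
    qed
  qed
  have "bsym_dist b z w \<le> card {k-b..<k+r}"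
    unfolding bsym_dist_def by (rule card_mono[OF _ sub]) simp
  then have "bsym_dist b z w \<le> r + b" using b by simp
  then show ?thesis using ge by (simp add: z_def w_def)
qed

theorem mainTheorem19:
  fixes b k t :: nat
  assumes "2 < b" and "b < k" and "t > (b - 1) div 2"
  shows "int (opt_redundancy b (bsym_wt b :: 'q::{finite,field} list \<Rightarrow> nat) k t)
           \<ge> 2 * int t - int b + 1"
proof -
  have b0: "0 < b" using assms by simp
  have ex: "\<exists>r p. is_fc_bsym_code b (bsym_wt b :: 'q list \<Rightarrow> nat) k r t p"
    using exists_code[OF b0] by blast
  have "\<exists>p. is_fc_bsym_code b (bsym_wt b :: 'q list \<Rightarrow> nat) k (opt_redundancy b (bsym_wt b :: 'q list \<Rightarrow> nat) k t) t p"
    unfolding opt_redundancy_def using LeastI_ex[of "\<lambda>r. \<exists>p. is_fc_bsym_code b (bsym_wt b :: 'q list \<Rightarrow> nat) k r t p"] ex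
    by blast
  then obtain p where "is_fc_bsym_code b (bsym_wt b :: 'q list \<Rightarrow> nat) k (opt_redundancy b (bsym_wt b :: 'q list \<Rightarrow> nat) k t) t p" by blast
  from lower[OF b0 assms(2) this] show ?thesis by simp
qed

end
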